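(* Let $\rho$ be a density operator with purity $\wp=\operatorname{tr}(\rho^2)$ and $O$ a traceless Hermitian operator on $\mathcal H$. Let $\mathcal E(\rho)=\{W\rho W^\dagger\}$ and $\mathcal E(O)=\{WOW^\dagger\}$ with $W$ Haar-random in $U(d)$. Then $$\mathbb E_{\rho'\sim\mathcal E(\rho)}[\operatorname{tr}(\rho'O)]^2=\mathbb E_{O'\sim\mathcal E(O)}[\operatorname{tr}(\rho O')]^2=\frac{d\wp-1}{d(d^2-1)}\|O\|_2^2,$$ $$\mathbb E_{\rho'\sim\mathcal E(\rho)}\|\Xi_{\rho',O}\|_2^2=\mathbb E_{O'\sim\mathcal E(O)}\|\Xi_{\rho,O'}\|_2^2=\frac{d^2\wp-d}{d^2-1}\|O\|_2^2,$$ $$\mathbb E_{\rho'\sim\mathcal E(\rho)}\tilde\Xi_{\rho',O}\cdot\Xi_{\rho',O}=\mathbb E_{O'\sim\mathcal E(O)}\tilde\Xi_{\rho,O'}\cdot\Xi_{\rho,O'}=\frac{d\wp-1}{d^2-1}\|O\|_2^2.$$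
   Context: $n\ge1$, $d=2^n$, $\mathcal H=(\mathbb C^2)^{\otimes n}$, $\overline{\mathcal P}_n=\{I,X,Y,Z\}^{\otimes n}$. For operators $A,B$ define functions on $\overline{\mathcal P}_n$ regarded as vectors in $\mathbb R^{d^2}$ (Euclidean norm, standard inner product): $\Xi_{A,B}(P)=\operatorname{tr}(AP)\operatorname{tr}(BP)$, $\tilde\Xi_{A,B}(P)=\operatorname{tr}(APBP)$. $\|O\|_2$ is the Hilbert–Schmidt norm. *)

theory Defs
  imports "HOL-Probability.Probability"
begin

text \<open>Hilbert space of n qubits: basis indexed by 'n \<Rightarrow> bool (n = CARD('n)), so d = 2^n.
  Operators are complex matrices indexed by this basis.\<close>

type_synonym 'n op = "complex ^ ('n \<Rightarrow> bool) ^ ('n \<Rightarrow> bool)"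

definition cadj :: "complex ^ 'a ^ 'a \<Rightarrow> complex ^ 'a ^ 'a" where
  "cadj M = (\<chi> i j. cnj (M $ j $ i))"

definition mtrace :: "complex ^ 'a ^ 'a \<Rightarrow> complex" where
  "mtrace M = (\<Sum>i\<in>UNIV. M $ i $ i)"

definition hermitian_mat :: "complex ^ 'a ^ 'a \<Rightarrow> bool" where
  "hermitian_mat M \<longleftrightarrow> cadj M = M"

definition unitary_mat :: "complex ^ 'a ^ 'a \<Rightarrow> bool" where
  "unitary_mat U \<longleftrightarrow> cadj U ** U = mat 1"

definition psd_mat :: "complex ^ 'a ^ 'a \<Rightarrow> bool" where
  "psd_mat M \<longleftrightarrow> (\<forall>v :: complex ^ 'a.
     Im (\<Sum>i\<in>UNIV. \<Sum>j\<in>UNIV. cnj (v $ i) * M $ i $ j * v $ j) = 0 \<and>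
     Re (\<Sum>i\<in>UNIV. \<Sum>j\<in>UNIV. cnj (v $ i) * M $ i $ j * v $ j) \<ge> 0)"

definition density_op :: "complex ^ 'a ^ 'a \<Rightarrow> bool" where
  "density_op \<rho> \<longleftrightarrow> hermitian_mat \<rho> \<and> psd_mat \<rho> \<and> mtrace \<rho> = 1"

definition hs_norm :: "complex ^ 'a ^ 'a \<Rightarrow> real" where
  "hs_norm M = sqrt (\<Sum>i\<in>UNIV. \<Sum>j\<in>UNIV. (cmod (M $ i $ j))\<^sup>2)"

definition conj_by :: "complex ^ 'a ^ 'a \<Rightarrow> complex ^ 'a ^ 'a \<Rightarrow> complex ^ 'a ^ 'a" where
  "conj_by W A = W ** A ** cadj W"

text \<open>Single-qubit Pauli matrices (basis False = |0>, True = |1>).\<close>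
datatype pauli = PI | PX | PY | PZ

instance pauli :: finite
proof
  have "(UNIV :: pauli set) = {PI, PX, PY, PZ}" by (auto intro: pauli.exhaust)
  then show "finite (UNIV :: pauli set)" by (metis finite.emptyI finite_insert)
qed

fun sigma :: "pauli \<Rightarrow> bool \<Rightarrow> bool \<Rightarrow> complex" where
  "sigma PI a b = (if a = b then 1 else 0)"
| "sigma PX a b = (if a = b then 0 else 1)"
| "sigma PY a b = (if a = b then 0 else if a then \<i> else - \<i>)"
| "sigma PZ a b = (if a = b then (if a then -1 else 1) else 0)"

definition pauli_mat :: "('n::finite \<Rightarrow> pauli) \<Rightarrow> 'n op" where
  "pauli_mat P = (\<chi> x y. \<Prod>k\<in>UNIV. sigma (P k) (x k) (y k))"

text \<open>\<Xi>_{A,B}(P) = tr(AP)tr(BP) and \<tilde>\<Xi>_{A,B}(P) = tr(APBP), as real vectors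
  (for Hermitian A, B these traces/products are real; we take real parts).\<close>
definition Xi :: "'n::finite op \<Rightarrow> 'n op \<Rightarrow> ('n \<Rightarrow> pauli) \<Rightarrow> real" where
  "Xi A B P = Re (mtrace (A ** pauli_mat P) * mtrace (B ** pauli_mat P))"

definition Xit :: "'n::finite op \<Rightarrow> 'n op \<Rightarrow> ('n \<Rightarrow> pauli) \<Rightarrow> real" where
  "Xit A B P = Re (mtrace (A ** pauli_mat P ** B ** pauli_mat P))"

definition vnorm2 :: "(('n::finite \<Rightarrow> pauli) \<Rightarrow> real) \<Rightarrow> real" where
  "vnorm2 f = (\<Sum>P\<in>UNIV. (f P)\<^sup>2)"

definition vdot :: "(('n::finite \<Rightarrow> pauli) \<Rightarrow> real) \<Rightarrow> (('n \<Rightarrow> pauli) \<Rightarrow> real) \<Rightarrow> real" where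
  "vdot f g = (\<Sum>P\<in>UNIV. f P * g P)"

text \<open>Haar probability measure on U(d): a probability measure on the Borel sets of
  d x d complex matrices, concentrated on unitaries, invariant under left multiplication
  by any unitary. (Such a measure exists and is unique.)\<close>
definition haar_measure :: "(complex ^ 'a ^ 'a) measure \<Rightarrow> bool" where
  "haar_measure \<mu> \<longleftrightarrow> prob_space \<mu> \<and> sets \<mu> = sets borel \<and>
     (AE W in \<mu>. unitary_mat W) \<and>
     (\<forall>V. unitary_mat V \<longrightarrow> distr \<mu> borel (\<lambda>W. V ** W) = \<mu>)"

end

theory Submission
  imports Defs "HOL-Library.Cardinality"
begin


lemma mmult_nth: "(A ** B) $ i $ j = (\<Sum>k\<in>UNIV. A $ i $ k * B $ k $ j)"
  by (simp add: matrix_matrix_mult_def)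

lemma cadj_nth[simp]: "cadj M $ i $ j = cnj (M $ j $ i)"
  by (simp add: cadj_def)

lemma mtrace_comm: "mtrace (A ** B) = mtrace (B ** A)"
  unfolding mtrace_def mmult_nth
  by (subst sum.swap) (simp add: mult.commute)

lemma cadj_cadj[simp]: "cadj (cadj A) = A"
  by (simp add: cadj_def vec_eq_iff)

lemma cadj_mult: "cadj (A ** B) = cadj B ** cadj A"
  by (simp add: vec_eq_iff mmult_nth mult.commute)

lemma herm_trace_real: assumes "hermitian_mat A" "hermitian_mat B"
  shows "cnj (mtrace (A ** B)) = mtrace (A ** B)"
proof -
  have "cnj (mtrace (A ** B)) = mtrace (cadj B ** cadj A)"
    unfolding mtrace_def mmult_nth by (simp add: mult.commute)
  also have "\<dots> = mtrace (B ** A)" using assms unfolding hermitian_mat_def by simp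
  also have "\<dots> = mtrace (A ** B)" by (rule mtrace_comm)
  finally show ?thesis .
qed

lemma cnj_eq_real: "cnj z = z \<Longrightarrow> z = complex_of_real (Re z)"
  by (metis Reals_cnj_iff of_real_Re)

lemma herm_trace_real': "hermitian_mat A \<Longrightarrow> hermitian_mat B \<Longrightarrow>
  mtrace (A ** B) = complex_of_real (Re (mtrace (A ** B)))"
  using herm_trace_real cnj_eq_real by blast

lemma herm_conj: "hermitian_mat M \<Longrightarrow> hermitian_mat (W ** M ** cadj W)"
  by (simp add: hermitian_mat_def cadj_mult matrix_mul_assoc)

lemma herm_mult3: "hermitian_mat P \<Longrightarrow> hermitian_mat M \<Longrightarrow> hermitian_mat (P ** M ** P)"
  by (simp add: hermitian_mat_def cadj_mult matrix_mul_assoc)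

lemma hs_norm_sq: assumes "hermitian_mat Q"
  shows "(hs_norm Q)\<^sup>2 = Re (mtrace (Q ** Q))"
proof -
  have "mtrace (Q ** Q) = (\<Sum>i\<in>UNIV. \<Sum>j\<in>UNIV. Q $ i $ j * cnj (Q $ i $ j))"
  proof -
    have "\<And>i j. Q $ j $ i = cnj (Q $ i $ j)" using assms unfolding hermitian_mat_def
      by (metis cadj_nth)
    then show ?thesis unfolding mtrace_def mmult_nth
      by (intro sum.cong refl) (metis)
  qed
  also have "\<dots> = (\<Sum>i\<in>UNIV. \<Sum>j\<in>UNIV. complex_of_real ((cmod (Q $ i $ j))\<^sup>2))"
    by (simp only: complex_norm_square)
  finally have "Re (mtrace (Q ** Q)) = (\<Sum>i\<in>UNIV. \<Sum>j\<in>UNIV. (cmod (Q $ i $ j))\<^sup>2)"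
    by simp
  moreover have "0 \<le> (\<Sum>i\<in>UNIV. \<Sum>j\<in>UNIV. (cmod (Q $ i $ j))\<^sup>2)"
    by (intro sum_nonneg) auto
  ultimately show ?thesis unfolding hs_norm_def
    by simp
qed




lemma UNIV_pauli: "(UNIV :: pauli set) = {PI, PX, PY, PZ}"
  by (auto intro: pauli.exhaust)

lemma sum_prod_fun:
  fixes f :: "'a::finite \<Rightarrow> 'b::finite \<Rightarrow> 'c::comm_semiring_1"
  shows "(\<Sum>x\<in>UNIV. \<Prod>k\<in>UNIV. f k (x k)) = (\<Prod>k\<in>UNIV. \<Sum>b\<in>UNIV. f k b)"
  using prod_sum_PiE[of "UNIV::'a set" "\<lambda>_. UNIV" f] by simp

lemma prod_if_univ:
  fixes c :: "'c::comm_semiring_1"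
  shows "(\<Prod>k\<in>(UNIV::'a::finite set). if p k then c else 0) = (if (\<forall>k. p k) then c ^ CARD('a) else 0)"
proof (cases "\<forall>k. p k")
  case True then show ?thesis by simp
next
  case False
  then obtain k where "\<not> p k" by blast
  then show ?thesis using False by (intro trans[OF prod_zero]) auto
qed

lemma sigma_sq: "(\<Sum>b\<in>UNIV. sigma s a b * sigma s b c) = (if a = c then 1 else 0)"
  by (cases s; cases a; cases c) (simp_all add: UNIV_bool)

lemma sigma_herm: "cnj (sigma s a b) = sigma s b a"
  by (cases s; cases a; cases b) simp_all

lemma sigma_tr: "(\<Sum>b\<in>UNIV. sigma s b b) = (if s = PI then 2 else 0)"
  by (cases s) (simp_all add: UNIV_bool)

lemma sigma_compl: "(\<Sum>s\<in>UNIV. sigma s a b * sigma s c e) = (if a = e \<and> b = c then 2 else 0)"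
  by (cases a; cases b; cases c; cases e) (simp_all add: UNIV_pauli)

lemma pauli_nth: "pauli_mat P $ x $ y = (\<Prod>k\<in>UNIV. sigma (P k) (x k) (y k))"
  by (simp add: pauli_mat_def)

lemma mat1_nth: "(mat 1 :: 'a::{zero,one}^'b^'b) $ x $ y = (if x = y then 1 else 0)"
  by (simp add: mat_def)

lemma pauli_sq: "pauli_mat P ** pauli_mat P = mat 1"
proof -
  have "(pauli_mat P ** pauli_mat P) $ x $ y = (if x = y then 1 else 0)" for x y
  proof -
    have "(pauli_mat P ** pauli_mat P) $ x $ y
        = (\<Sum>z\<in>UNIV. \<Prod>k\<in>UNIV. sigma (P k) (x k) (z k) * sigma (P k) (z k) (y k))"
      by (simp add: mmult_nth pauli_nth prod.distrib)
    also have "\<dots> = (\<Prod>k\<in>UNIV. \<Sum>b\<in>UNIV. sigma (P k) (x k) b * sigma (P k) b (y k))"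
      by (rule sum_prod_fun)
    also have "\<dots> = (\<Prod>k\<in>UNIV. if x k = y k then 1 else 0)"
      by (simp add: sigma_sq)
    also have "\<dots> = (if x = y then 1 else 0)"
      by (simp add: prod_if_univ fun_eq_iff)
    finally show ?thesis .
  qed
  then show ?thesis by (simp add: vec_eq_iff mat1_nth)
qed

lemma pauli_herm: "hermitian_mat (pauli_mat P)"
  by (simp add: hermitian_mat_def vec_eq_iff pauli_nth sigma_herm)

lemma pauli_id: "pauli_mat (\<lambda>_. PI) = mat 1"
  by (simp add: vec_eq_iff pauli_nth mat1_nth prod_if_univ fun_eq_iff)

lemma pauli_trace: "mtrace (pauli_mat (P::'n::finite \<Rightarrow> pauli)) = (if P = (\<lambda>_. PI) then 2 ^ CARD('n) else 0)"
proof -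
  have "mtrace (pauli_mat P) = (\<Prod>k\<in>UNIV. \<Sum>b\<in>UNIV. sigma (P k) b b)"
    unfolding mtrace_def pauli_nth by (rule sum_prod_fun)
  also have "\<dots> = (\<Prod>k\<in>UNIV. if P k = PI then 2 else 0)" by (simp add: sigma_tr)
  also have "\<dots> = (if P = (\<lambda>_. PI) then 2 ^ CARD('n) else 0)"
    by (simp add: prod_if_univ fun_eq_iff)
  finally show ?thesis .
qed

lemma pauli_compl: "(\<Sum>P\<in>UNIV. pauli_mat (P::'n::finite \<Rightarrow> pauli) $ a $ b * pauli_mat P $ c $ e)
   = (if a = e \<and> b = c then 2 ^ CARD('n) else 0)"
proof -
  have "(\<Sum>P\<in>UNIV. pauli_mat (P::'n::finite \<Rightarrow> pauli) $ a $ b * pauli_mat P $ c $ e)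
     = (\<Sum>P\<in>UNIV. \<Prod>k\<in>UNIV. sigma (P k) (a k) (b k) * sigma (P k) (c k) (e k))"
    by (simp add: pauli_nth prod.distrib)
  also have "\<dots> = (\<Prod>k\<in>UNIV. \<Sum>s\<in>UNIV. sigma s (a k) (b k) * sigma s (c k) (e k))"
    by (rule sum_prod_fun)
  also have "\<dots> = (\<Prod>k\<in>UNIV. if a k = e k \<and> b k = c k then 2 else 0)"
    by (simp add: sigma_compl)
  also have "\<dots> = (if a = e \<and> b = c then 2 ^ CARD('n) else 0)"
    by (simp add: prod_if_univ fun_eq_iff)
  finally show ?thesis .
qed

lemma if_and_zero: "(a::'a::mult_zero) * (if P \<and> Q then c else 0) = (if P then if Q then a * c else 0 else 0)" by simp

lemma pauli_trace_compl:
  fixes A B :: "'n::finite op"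
  shows "(\<Sum>P\<in>UNIV. mtrace (A ** pauli_mat P) * mtrace (B ** pauli_mat P))
     = 2 ^ CARD('n) * mtrace (A ** B)"
proof -
  have "(\<Sum>P\<in>UNIV. mtrace (A ** pauli_mat P) * mtrace (B ** pauli_mat P))
     = (\<Sum>P\<in>UNIV. \<Sum>x\<in>UNIV. \<Sum>z\<in>UNIV. \<Sum>y\<in>UNIV. \<Sum>w\<in>UNIV.
          A $ x $ y * B $ z $ w * (pauli_mat P $ y $ x * pauli_mat P $ w $ z))"
    unfolding mtrace_def mmult_nth sum_product
    by (intro sum.cong refl) (simp add: sum_distrib_left algebra_simps)
  also have "\<dots> = (\<Sum>x\<in>UNIV. \<Sum>z\<in>UNIV. \<Sum>y\<in>UNIV. \<Sum>w\<in>UNIV.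
          A $ x $ y * B $ z $ w * (\<Sum>P\<in>UNIV. pauli_mat P $ y $ x * pauli_mat P $ w $ z))"
    by (simp add: sum_distrib_left sum.swap[of _ "UNIV::('n\<Rightarrow>pauli) set"])
  also have "\<dots> = (\<Sum>x\<in>UNIV. \<Sum>z\<in>UNIV. \<Sum>y\<in>UNIV. \<Sum>w\<in>UNIV.
          A $ x $ y * B $ z $ w * (if x = w \<and> y = z then 2 ^ CARD('n) else 0))"
    by (simp add: pauli_compl conj_commute)
  also have "\<dots> = (\<Sum>x\<in>UNIV. \<Sum>z\<in>UNIV. A $ x $ z * B $ z $ x * 2 ^ CARD('n))"
    by (simp only: if_and_zero sum.delta' sum.delta finite UNIV_I if_True)
  also have "\<dots> = 2 ^ CARD('n) * mtrace (A ** B)"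
    unfolding mtrace_def mmult_nth
    by (simp add: sum_distrib_left algebra_simps sum.delta sum.delta')
  finally show ?thesis .
qed




definition inv_tensor :: "('a::finite \<Rightarrow> 'a \<Rightarrow> 'a \<Rightarrow> 'a \<Rightarrow> complex) \<Rightarrow> bool" where
  "inv_tensor G \<longleftrightarrow> (\<forall>V::complex^'a^'a. unitary_mat V \<longrightarrow> (\<forall>i j k l. G i j k l =
     (\<Sum>a\<in>UNIV. V$i$a * (\<Sum>b\<in>UNIV. cnj (V$j$b) * (\<Sum>c\<in>UNIV. V$k$c * (\<Sum>d\<in>UNIV. cnj (V$l$d) * G a b c d))))))"

lemma inv_tensorD: "inv_tensor G \<Longrightarrow> unitary_mat V \<Longrightarrow> G i j k l =
     (\<Sum>a\<in>UNIV. V$i$a * (\<Sum>b\<in>UNIV. cnj (V$j$b) * (\<Sum>c\<in>UNIV. V$k$c * (\<Sum>d\<in>UNIV. cnj (V$l$d) * G a b c d))))"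
  unfolding inv_tensor_def by blast

lemma sum_single: "(\<And>a. a \<noteq> p \<Longrightarrow> f a = 0) \<Longrightarrow> (\<Sum>a\<in>(UNIV::'a::finite set). f a) = f p"
  by (subst sum.mono_neutral_cong_right[of UNIV "{p}" f f]) auto

lemma sum_two: "p \<noteq> q \<Longrightarrow> (\<And>a. a \<noteq> p \<Longrightarrow> a \<noteq> q \<Longrightarrow> f a = 0) \<Longrightarrow>
   (\<Sum>a\<in>(UNIV::'a::finite set). f a) = f p + f q"
  by (subst sum.mono_neutral_cong_right[of UNIV "{p,q}" f f]) auto

lemma unitaryI: "(\<And>x y. (\<Sum>k\<in>UNIV. cnj (V $ k $ x) * V $ k $ y) = (if x = y then 1 else 0)) \<Longrightarrow> unitary_mat V"
  unfolding unitary_mat_def by (simp add: vec_eq_iff mmult_nth mat1_nth)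

definition ph :: "'a \<Rightarrow> 'a \<Rightarrow> complex" where "ph m x = (if x = m then \<i> else 1)"

definition Dg :: "'a::finite \<Rightarrow> complex^'a^'a" where "Dg m = (\<chi> x a. if x = a then ph m x else 0)"

lemma Dg_nth: "Dg m $ x $ a = (if x = a then ph m x else 0)" by (simp add: Dg_def)

lemma Dg_unitary: "unitary_mat (Dg m)"
proof (rule unitaryI)
  fix x y
  show "(\<Sum>k\<in>UNIV. cnj (Dg m $ k $ x) * Dg m $ k $ y) = (if x = y then 1 else 0)"
    by (subst sum_single[of x]) (auto simp: Dg_nth ph_def)
qed

lemma Dg_row: "(\<Sum>a\<in>UNIV. Dg m $ x $ a * F a) = ph m x * F x"
  by (subst sum_single[of x]) (auto simp: Dg_nth)

lemma Dg_row_cnj: "(\<Sum>a\<in>UNIV. cnj (Dg m $ x $ a) * F a) = cnj (ph m x) * F x"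
  by (subst sum_single[of x]) (auto simp: Dg_nth)

lemma inv_zero:
  assumes "inv_tensor G" "G i j k l \<noteq> 0"
  shows "(i = j \<and> k = l) \<or> (i = l \<and> k = j)"
proof -
  have eq: "G i j k l = ph m i * (cnj (ph m j) * (ph m k * (cnj (ph m l) * G i j k l)))" for m
    using inv_tensorD[OF assms(1) Dg_unitary, of i j k l m] by (simp only: Dg_row Dg_row_cnj)
  have e1: "ph m i * (cnj (ph m j) * (ph m k * cnj (ph m l))) = 1" for m
  proof -
    have "G i j k l = (ph m i * (cnj (ph m j) * (ph m k * cnj (ph m l)))) * G i j k l"
      using eq[of m] by (simp add: ac_simps)
    then show ?thesis using assms(2) mult_cancel_right1 by blast
  qed
  show ?thesis using e1[of i] e1[of k] unfolding ph_def
    by (cases "j = i"; cases "l = i"; cases "k = i"; cases "j = k"; cases "l = k") simp_all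
qed

definition sw :: "'a \<Rightarrow> 'a \<Rightarrow> 'a \<Rightarrow> 'a" where
  "sw p q x = (if x = p then q else if x = q then p else x)"

lemma sw_sw[simp]: "sw p q (sw p q x) = x" by (simp add: sw_def)

definition Pm :: "'a::finite \<Rightarrow> 'a \<Rightarrow> complex^'a^'a" where
  "Pm p q = (\<chi> x a. if a = sw p q x then 1 else 0)"

lemma Pm_nth: "Pm p q $ x $ a = (if a = sw p q x then 1 else 0)" by (simp add: Pm_def)

lemma Pm_unitary: "unitary_mat (Pm p q)"
proof (rule unitaryI)
  fix x y
  show "(\<Sum>k\<in>UNIV. cnj (Pm p q $ k $ x) * Pm p q $ k $ y) = (if x = y then 1 else 0)"
    by (subst sum_single[of "sw p q x"]) (auto simp: Pm_nth)
qed

lemma Pm_row: "(\<Sum>a\<in>UNIV. Pm p q $ x $ a * F a) = F (sw p q x)"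
  by (subst sum_single[of "sw p q x"]) (auto simp: Pm_nth)

lemma Pm_row_cnj: "(\<Sum>a\<in>UNIV. cnj (Pm p q $ x $ a) * F a) = F (sw p q x)"
  by (subst sum_single[of "sw p q x"]) (auto simp: Pm_nth)

lemma inv_swap:
  assumes "inv_tensor G"
  shows "G i j k l = G (sw p q i) (sw p q j) (sw p q k) (sw p q l)"
  using inv_tensorD[OF assms(1) Pm_unitary, of i j k l p q] by (simp only: Pm_row Pm_row_cnj)

lemma inv_const:
  assumes "inv_tensor G" "i0 \<noteq> k0"
  shows "G i i i i = G i0 i0 i0 i0"
    and "i \<noteq> k \<Longrightarrow> G i i k k = G i0 i0 k0 k0"
    and "i \<noteq> k \<Longrightarrow> G i k k i = G i0 k0 k0 i0"
proof -
  show "G i i i i = G i0 i0 i0 i0"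
    using inv_swap[OF assms(1), of i i i i i i0] by (simp add: sw_def)
next
  assume ik: "i \<noteq> k"
  define k' where "k' = sw i i0 k"
  have k': "k' \<noteq> i0" using ik unfolding k'_def sw_def by auto
  have "G i i k k = G i0 i0 k' k'"
    using inv_swap[OF assms(1), of i i k k i i0] by (simp add: sw_def k'_def)
  also have "\<dots> = G i0 i0 k0 k0"
    using inv_swap[OF assms(1), of i0 i0 k' k' k' k0] k' assms(2) by (simp add: sw_def)
  finally show "G i i k k = G i0 i0 k0 k0" .
next
  assume ik: "i \<noteq> k"
  define k' where "k' = sw i i0 k"
  have k': "k' \<noteq> i0" using ik unfolding k'_def sw_def by auto
  have "G i k k i = G i0 k' k' i0"
    using inv_swap[OF assms(1), of i k k i i i0] by (simp add: sw_def k'_def)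
  also have "\<dots> = G i0 k0 k0 i0"
    using inv_swap[OF assms(1), of i0 k' k' i0 k' k0] k' assms(2) by (simp add: sw_def)
  finally show "G i k k i = G i0 k0 k0 i0" .
qed

definition sr :: complex where "sr = complex_of_real (1 / sqrt 2)"

lemma sr_sq: "sr * sr = 1/2"
proof -
  have h: "1 / sqrt 2 * (1 / sqrt 2) = (1/2::real)" by (simp add: field_simps)
  have "sr * sr = complex_of_real (1 / sqrt 2 * (1 / sqrt 2))" unfolding sr_def by (simp only: of_real_mult)
  also have "\<dots> = 1/2" unfolding h by simp
  finally show ?thesis .
qed

lemma sr_cnj[simp]: "cnj sr = sr" by (simp add: sr_def)

definition Rt :: "'a::finite \<Rightarrow> 'a \<Rightarrow> complex^'a^'a" where
  "Rt p q = (\<chi> x a. if x = p then (if a = p \<or> a = q then sr else 0)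
      else if x = q then (if a = p then sr else if a = q then - sr else 0)
      else (if a = x then 1 else 0))"

lemma Rt_nth: "Rt p q $ x $ a = (if x = p then (if a = p \<or> a = q then sr else 0)
      else if x = q then (if a = p then sr else if a = q then - sr else 0)
      else (if a = x then 1 else 0))" by (simp add: Rt_def)

lemma Rt_unitary: assumes pq: "p \<noteq> q" shows "unitary_mat (Rt p q)"
proof (rule unitaryI)
  fix x y
  show "(\<Sum>k\<in>UNIV. cnj (Rt p q $ k $ x) * Rt p q $ k $ y) = (if x = y then 1 else 0)"
  proof (cases "x = p \<or> x = q")
    case True
    have "(\<Sum>k\<in>UNIV. cnj (Rt p q $ k $ x) * Rt p q $ k $ y) =
       cnj (Rt p q $ p $ x) * Rt p q $ p $ y + cnj (Rt p q $ q $ x) * Rt p q $ q $ y"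
      by (rule sum_two[OF pq]) (use True in \<open>auto simp: Rt_nth\<close>)
    also have "\<dots> = (if x = y then 1 else 0)"
      using True pq by (auto simp: Rt_nth sr_sq)
    finally show ?thesis .
  next
    case False
    have "(\<Sum>k\<in>UNIV. cnj (Rt p q $ k $ x) * Rt p q $ k $ y) = cnj (Rt p q $ x $ x) * Rt p q $ x $ y"
      by (rule sum_single) (use False in \<open>auto simp: Rt_nth\<close>)
    also have "\<dots> = (if x = y then 1 else 0)"
      using False by (auto simp: Rt_nth)
    finally show ?thesis .
  qed
qed

lemma Rt_row: "p \<noteq> q \<Longrightarrow> (\<Sum>a\<in>UNIV. Rt p q $ p $ a * F a) = sr * F p + sr * F q"
  by (subst sum_two[of p q]) (auto simp: Rt_nth)

lemma Rt_row_cnj: "p \<noteq> q \<Longrightarrow> (\<Sum>a\<in>UNIV. cnj (Rt p q $ p $ a) * F a) = sr * F p + sr * F q"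
  by (subst sum_two[of p q]) (auto simp: Rt_nth)

lemma inv_abe:
  assumes "inv_tensor G" "p \<noteq> q"
  shows "G p p p p = G p p q q + G p q q p"
proof -
  have z: "\<And>a b c d. \<not> ((a = b \<and> c = d) \<or> (a = d \<and> c = b)) \<Longrightarrow> G a b c d = 0"
    using inv_zero[OF assms(1)] by blast
  have c1: "G q q q q = G p p p p" using inv_const(1)[OF assms] .
  have c2: "G q q p p = G p p q q" using inv_const(2)[OF assms, of q p] assms(2) by simp
  have c3: "G q p p q = G p q q p" using inv_const(3)[OF assms, of q p] assms(2) by simp
  have "G p p p p = sr * (sr * (sr * (sr * G p p p p + sr * G p p p q) + sr * (sr * G p p q p + sr * G p p q q))
     + sr * (sr * (sr * G p q p p + sr * G p q p q) + sr * (sr * G p q q p + sr * G p q q q)))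
     + sr * (sr * (sr * (sr * G q p p p + sr * G q p p q) + sr * (sr * G q p q p + sr * G q p q q))
     + sr * (sr * (sr * G q q p p + sr * G q q p q) + sr * (sr * G q q q p + sr * G q q q q)))"
    using inv_tensorD[OF assms(1) Rt_unitary[OF assms(2)], of p p p p]
    by (simp only: Rt_row[OF assms(2)] Rt_row_cnj[OF assms(2)])
  also have "\<dots> = (sr * sr) * (sr * sr) * (2 * G p p p p + 2 * G p p q q + 2 * G p q q p)"
    using assms(2) by (simp add: z c1 c2 c3 algebra_simps)
  also have "(sr * sr) * (sr * sr) = 1/4" by (simp add: sr_sq)
  finally have "G p p p p = (1/4) * (2 * G p p p p + 2 * G p p q q + 2 * G p q q p)" .
  then have "2 * G p p p p = 2 * G p p q q + 2 * G p q q p" by (simp add: field_simps)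
  then have "2 * G p p p p = 2 * (G p p q q + G p q q p)" by (simp only: distrib_left)
  moreover have "(2::complex) \<noteq> 0" by simp
  ultimately show ?thesis by (metis mult_left_cancel)
qed

lemma inv_struct:
  assumes "inv_tensor (G :: 'a::finite \<Rightarrow> 'a \<Rightarrow> 'a \<Rightarrow> 'a \<Rightarrow> complex)" "i0 \<noteq> k0"
  shows "G i j k l = (if i = j \<and> k = l then G i0 i0 k0 k0 else 0) + (if i = l \<and> j = k then G i0 k0 k0 i0 else 0)"
proof -
  have a: "G i0 i0 i0 i0 = G i0 i0 k0 k0 + G i0 k0 k0 i0" by (rule inv_abe[OF assms])
  show ?thesis
  proof (cases "i = j \<and> k = l")
    case True
    show ?thesis
    proof (cases "i = k")
      case True2: True
      from True True2 have e: "j = i" "k = i" "l = i" by auto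
      have r: "(if i = j \<and> k = l then G i0 i0 k0 k0 else 0) + (if i = l \<and> j = k then G i0 k0 k0 i0 else 0)
         = G i0 i0 k0 k0 + G i0 k0 k0 i0" using e by simp
      have "G i j k l = G i0 i0 i0 i0" unfolding e by (rule inv_const(1)[OF assms])
      then show ?thesis by (simp only: r a)
    next
      case False2: False
      have r: "(if i = j \<and> k = l then G i0 i0 k0 k0 else 0) + (if i = l \<and> j = k then G i0 k0 k0 i0 else 0)
         = G i0 i0 k0 k0" using True False2 by auto
      from True have e: "j = i" "l = k" by auto
      have "G i j k l = G i0 i0 k0 k0" unfolding e by (rule inv_const(2)[OF assms False2])
      then show ?thesis by (simp only: r)
    qed
  next
    case False
    show ?thesis
    proof (cases "i = l \<and> j = k")
      case True
      then have ik: "i \<noteq> k" using False by auto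
      have r: "(if i = j \<and> k = l then G i0 i0 k0 k0 else 0) + (if i = l \<and> j = k then G i0 k0 k0 i0 else 0)
         = G i0 k0 k0 i0" using True False by auto
      from True have e: "l = i" "j = k" by auto
      have "G i j k l = G i0 k0 k0 i0" unfolding e by (rule inv_const(3)[OF assms ik])
      then show ?thesis by (simp only: r)
    next
      case False2: False
      have n: "\<not> ((i = j \<and> k = l) \<or> (i = l \<and> k = j))" using False False2 by blast
      have "G i j k l = 0"
      proof (rule ccontr)
        assume "G i j k l \<noteq> 0"
        then have "(i = j \<and> k = l) \<or> (i = l \<and> k = j)" by (rule inv_zero[OF assms(1)])
        with n show False by blast
      qed
      moreover have "(if i = j \<and> k = l then G i0 i0 k0 k0 else 0) + (if i = l \<and> j = k then G i0 k0 k0 i0 else 0) = 0"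
        by (simp only: False False2 if_False add_0)
      ultimately show ?thesis by (simp only:)
    qed
  qed
qed




lemma sum_if_const: "(\<Sum>k\<in>A. if P then f k else 0) = (if P then sum f A else 0)" by simp

lemma struct_sums:
  fixes G :: "'a::finite \<Rightarrow> 'a \<Rightarrow> 'a \<Rightarrow> 'a \<Rightarrow> complex"
  assumes G: "\<And>i j k l. G i j k l = (if i = j \<and> k = l then b else 0) + (if i = l \<and> j = k then e else 0)"
  shows "(\<Sum>i\<in>UNIV. \<Sum>k\<in>UNIV. G i i k k) = b * of_nat CARD('a)^2 + e * of_nat CARD('a)"
    and "(\<Sum>i\<in>UNIV. \<Sum>j\<in>UNIV. G i j j i) = b * of_nat CARD('a) + e * of_nat CARD('a)^2"
    and "(\<Sum>i\<in>UNIV. \<Sum>j\<in>UNIV. \<Sum>k\<in>UNIV. \<Sum>l\<in>UNIV. A $ j $ i * B $ l $ k * G i j k l)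
          = b * mtrace A * mtrace B + e * mtrace (A ** B)"
proof -
  show "(\<Sum>i\<in>UNIV. \<Sum>k\<in>UNIV. G i i k k) = b * of_nat CARD('a)^2 + e * of_nat CARD('a)"
    by (simp add: G sum.distrib sum.delta power2_eq_square algebra_simps)
  have g2: "\<And>i j. G i j j i = (if i = j then b else 0) + e" using G by auto
  show "(\<Sum>i\<in>UNIV. \<Sum>j\<in>UNIV. G i j j i) = b * of_nat CARD('a) + e * of_nat CARD('a)^2"
    by (simp add: g2 sum.distrib sum.delta power2_eq_square algebra_simps)
  have "(\<Sum>i\<in>UNIV. \<Sum>j\<in>UNIV. \<Sum>k\<in>UNIV. \<Sum>l\<in>UNIV. A $ j $ i * B $ l $ k * G i j k l)
    = (\<Sum>i\<in>UNIV. \<Sum>j\<in>UNIV. \<Sum>k\<in>UNIV. \<Sum>l\<in>UNIV.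
         (if l = k then if j = i then b * (A $ j $ i * B $ l $ k) else 0 else 0)
       + (if l = i then if k = j then e * (A $ j $ i * B $ l $ k) else 0 else 0))"
    by (intro sum.cong refl) (auto simp: G algebra_simps)
  also have "\<dots> = (\<Sum>i\<in>UNIV. \<Sum>k\<in>UNIV. b * (A $ i $ i * B $ k $ k))
      + (\<Sum>i\<in>UNIV. \<Sum>j\<in>UNIV. e * (A $ j $ i * B $ i $ j))"
    by (simp only: sum.distrib sum.delta sum.delta' finite UNIV_I if_True sum_if_const)
  also have "\<dots> = b * mtrace A * mtrace B + e * mtrace (A ** B)"
    unfolding mtrace_def mmult_nth
    by (simp add: sum_distrib_left sum_product algebra_simps) (rule sum.swap)
  finally show "(\<Sum>i\<in>UNIV. \<Sum>j\<in>UNIV. \<Sum>k\<in>UNIV. \<Sum>l\<in>UNIV. A $ j $ i * B $ l $ k * G i j k l)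
          = b * mtrace A * mtrace B + e * mtrace (A ** B)" .
qed




lemma unitary_entry_bound:
  assumes "unitary_mat W" shows "cmod (W $ i $ j) \<le> 1"
proof -
  have "(cadj W ** W) $ j $ j = 1" using assms by (simp add: unitary_mat_def mat1_nth)
  then have "(\<Sum>k\<in>UNIV. cnj (W $ k $ j) * W $ k $ j) = 1" by (simp add: mmult_nth)
  moreover have eq: "\<And>k. cnj (W$k$j) * W$k$j = complex_of_real ((cmod (W$k$j))\<^sup>2)"
    by (subst complex_norm_square) (rule mult.commute)
  ultimately have "(\<Sum>k\<in>UNIV. complex_of_real ((cmod (W $ k $ j))\<^sup>2)) = 1"
    by (simp only: eq)
  then have s: "(\<Sum>k\<in>UNIV. (cmod (W $ k $ j))\<^sup>2) = 1"
    by (metis of_real_eq_1_iff of_real_sum)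
  have "(cmod (W $ i $ j))\<^sup>2 \<le> (\<Sum>k\<in>UNIV. (cmod (W $ k $ j))\<^sup>2)"
    by (rule member_le_sum) auto
  then have "(cmod (W $ i $ j))\<^sup>2 \<le> 1\<^sup>2" using s by simp
  then show ?thesis by (rule power2_le_imp_le) simp
qed

lemma conj_entry: "(W ** M ** cadj W) $ i $ j = (\<Sum>a\<in>UNIV. \<Sum>b\<in>UNIV. W$i$a * M$a$b * cnj (W$j$b))"
  by (simp add: mmult_nth sum_distrib_right) (rule sum.swap)

lemma conj_bound:
  assumes "unitary_mat W"
  shows "cmod ((W ** M ** cadj W) $ i $ j) \<le> (\<Sum>a\<in>UNIV. \<Sum>b\<in>UNIV. cmod (M$a$b))"
proof -
  have "cmod ((W ** M ** cadj W) $ i $ j) \<le> (\<Sum>a\<in>UNIV. \<Sum>b\<in>UNIV. cmod (W$i$a * M$a$b * cnj (W$j$b)))"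
    unfolding conj_entry by (rule order_trans[OF norm_sum sum_mono[OF norm_sum]])
  also have "\<dots> \<le> (\<Sum>a\<in>UNIV. \<Sum>b\<in>UNIV. cmod (M$a$b))"
  proof (intro sum_mono)
    fix a b
    have "cmod (W$i$a * M$a$b * cnj (W$j$b)) = cmod (W$i$a) * cmod (M$a$b) * cmod (W$j$b)"
      by (simp add: norm_mult)
    also have "\<dots> \<le> 1 * cmod (M$a$b) * 1"
      using unitary_entry_bound[OF assms]
      by (intro mult_mono) (auto simp: mult_le_one)
    finally show "cmod (W$i$a * M$a$b * cnj (W$j$b)) \<le> cmod (M$a$b)" by simp
  qed
  finally show ?thesis .
qed

lemma isCont_nth2: "isCont (\<lambda>W::complex^'a::finite^'c::finite. W $ i $ j) x"
  by simp

lemma isCont_entry: "isCont (\<lambda>W::complex^'a::finite^'a. (W ** M ** cadj W) $ i $ j) x"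
  unfolding conj_entry by (intro continuous_intros isCont_nth2)

lemma meas_entry: "(\<lambda>W::complex^'a::finite^'a. (W ** M ** cadj W) $ i $ j) \<in> borel_measurable borel"
  by (intro borel_measurable_continuous_onI continuous_at_imp_continuous_on ballI isCont_entry)

lemma isCont_lmult: "isCont (\<lambda>W::complex^'a::finite^'a. V ** W) x"
  unfolding isCont_def
  by (intro vec_tendstoI) (simp add: mmult_nth tendsto_intros)

lemma meas_lmult: "(\<lambda>W::complex^'a::finite^'a. V ** W) \<in> borel_measurable borel"
  by (intro borel_measurable_continuous_onI continuous_at_imp_continuous_on ballI isCont_lmult)




lemma haarD:
  assumes "haar_measure \<mu>"
  shows "prob_space \<mu>" "sets \<mu> = sets borel" "AE W in \<mu>. unitary_mat W"
    "unitary_mat V \<Longrightarrow> distr \<mu> borel (\<lambda>W. V ** W) = \<mu>"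
  using assms unfolding haar_measure_def by auto

lemma meas_mu:
  fixes f :: "complex^'a::finite^'a \<Rightarrow> 'b::topological_space"
  assumes "haar_measure \<mu>" "f \<in> borel_measurable borel"
  shows "f \<in> borel_measurable \<mu>"
proof -
  have "measurable \<mu> borel = measurable borel (borel :: 'b measure)"
    by (rule measurable_cong_sets[OF haarD(2)[OF assms(1)] refl])
  then show ?thesis using assms(2) by simp
qed

lemma cont_meas: "(\<And>x. isCont f x) \<Longrightarrow> f \<in> borel_measurable borel"
  by (intro borel_measurable_continuous_onI continuous_at_imp_continuous_on ballI)

lemma integrable_prod2:
  fixes M :: "complex^'a::finite^'a"
  assumes "haar_measure \<mu>"
  shows "integrable \<mu> (\<lambda>W. conj_by W M $ i $ j * conj_by W M $ k $ l)"
proof -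
  interpret prob_space \<mu> using haarD(1)[OF assms] .
  define C where "C = (\<Sum>a\<in>UNIV. \<Sum>b\<in>UNIV. cmod (M$a$b))"
  show ?thesis
  proof (rule integrable_const_bound[where B="C * C"])
    show "AE W in \<mu>. norm (conj_by W M $ i $ j * conj_by W M $ k $ l) \<le> C * C"
      using haarD(3)[OF assms]
    proof (rule AE_mp, intro AE_I2 impI)
      fix W :: "complex^'a^'a" assume u: "unitary_mat W"
      have "norm (conj_by W M $ i $ j * conj_by W M $ k $ l)
           = cmod (conj_by W M $ i $ j) * cmod (conj_by W M $ k $ l)" by (simp add: norm_mult)
      also have "\<dots> \<le> C * C" unfolding conj_by_def C_def
        by (intro mult_mono conj_bound[OF u] norm_ge_zero sum_nonneg)
      finally show "norm (conj_by W M $ i $ j * conj_by W M $ k $ l) \<le> C * C" .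
    qed
    show "(\<lambda>W. conj_by W M $ i $ j * conj_by W M $ k $ l) \<in> borel_measurable \<mu>"
      by (intro meas_mu[OF assms] cont_meas) (simp add: conj_by_def isCont_entry continuous_intros)
  qed
qed

definition GM :: "(complex^'a^'a) measure \<Rightarrow> complex^'a^'a \<Rightarrow> 'a::finite \<Rightarrow> 'a \<Rightarrow> 'a \<Rightarrow> 'a \<Rightarrow> complex" where
  "GM \<mu> M i j k l = (\<integral>W. conj_by W M $ i $ j * conj_by W M $ k $ l \<partial>\<mu>)"

lemma int_nest:
  assumes "\<And>a b c d. integrable \<mu> (h a b c d)"
  shows "(\<integral>W. (\<Sum>a\<in>UNIV. f1 a * (\<Sum>b\<in>UNIV. f2 b * (\<Sum>c\<in>UNIV. f3 c * (\<Sum>d\<in>UNIV. f4 d * (h a b c d W :: complex))))) \<partial>\<mu>)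
    = (\<Sum>a\<in>UNIV. f1 a * (\<Sum>b\<in>UNIV. f2 b * (\<Sum>c\<in>UNIV. f3 c * (\<Sum>d\<in>UNIV. f4 d * integral\<^sup>L \<mu> (h a b c d)))))"
  using assms by (simp add: integrable_sum integrable_mult_right)

lemma int_sum4:
  assumes "\<And>a b c d. integrable \<mu> (h a b c d)"
  shows "(\<integral>W. (\<Sum>a\<in>UNIV. \<Sum>b\<in>UNIV. \<Sum>c\<in>UNIV. \<Sum>d\<in>UNIV. f a b c d * (h a b c d W :: complex)) \<partial>\<mu>)
    = (\<Sum>a\<in>UNIV. \<Sum>b\<in>UNIV. \<Sum>c\<in>UNIV. \<Sum>d\<in>UNIV. f a b c d * integral\<^sup>L \<mu> (h a b c d))"
  using assms by (simp add: integrable_sum integrable_mult_right)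

lemma conj_entry2: "(V ** Y ** cadj V) $ i $ j = (\<Sum>a\<in>UNIV. V$i$a * (\<Sum>b\<in>UNIV. cnj (V$j$b) * Y$a$b))"
  unfolding conj_entry by (simp add: sum_distrib_left mult_ac)

lemma l1: "(y::complex) * (\<Sum>c\<in>A. g c * h c) = (\<Sum>c\<in>A. g c * (y * h c))"
  by (simp add: sum_distrib_left mult.left_commute)

lemma prod_nest: "(\<Sum>a\<in>UNIV. f1 a * (\<Sum>b\<in>UNIV. f2 b * Y a b)) * (\<Sum>c\<in>UNIV. f3 c * (\<Sum>d\<in>UNIV. f4 d * Y c d))
  = (\<Sum>a\<in>UNIV. f1 a * (\<Sum>b\<in>UNIV. f2 b * (\<Sum>c\<in>UNIV. f3 c * (\<Sum>d\<in>UNIV. f4 d * (Y a b * Y c d :: complex)))))"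
proof -
  define R where "R = (\<Sum>c\<in>UNIV. f3 c * (\<Sum>d\<in>UNIV. f4 d * Y c d))"
  have r: "Y a b * R = (\<Sum>c\<in>UNIV. f3 c * (\<Sum>d\<in>UNIV. f4 d * (Y a b * Y c d)))" for a b
    unfolding R_def by (simp add: sum_distrib_left mult_ac)
  have "(\<Sum>a\<in>UNIV. f1 a * (\<Sum>b\<in>UNIV. f2 b * Y a b)) * R
      = (\<Sum>a\<in>UNIV. f1 a * (\<Sum>b\<in>UNIV. f2 b * (Y a b * R)))"
    by (simp only: sum_distrib_right mult.assoc)
  also have "\<dots> = (\<Sum>a\<in>UNIV. f1 a * (\<Sum>b\<in>UNIV. f2 b * (\<Sum>c\<in>UNIV. f3 c * (\<Sum>d\<in>UNIV. f4 d * (Y a b * Y c d)))))"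
    by (simp only: r)
  finally show ?thesis unfolding R_def .
qed

lemma conj_by_mult: "conj_by (V ** W) M = V ** conj_by W M ** cadj V"
  by (simp add: conj_by_def cadj_mult matrix_mul_assoc)

lemma GM_inv:
  fixes M :: "complex^'a::finite^'a"
  assumes "haar_measure \<mu>"
  shows "inv_tensor (GM \<mu> M)"
  unfolding inv_tensor_def
proof (intro allI impI)
  fix V :: "complex^'a^'a" and i j k l assume V: "unitary_mat V"
  define f where "f W = conj_by W M $ i $ j * conj_by W M $ k $ l" for W
  have fm: "f \<in> borel_measurable borel" unfolding f_def
    by (intro cont_meas) (simp add: conj_by_def isCont_entry continuous_intros)
  have Tm: "(\<lambda>W. V ** W) \<in> measurable \<mu> borel"
    by (rule meas_mu[OF assms meas_lmult])
  have "GM \<mu> M i j k l = integral\<^sup>L \<mu> f" unfolding GM_def f_def ..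
  also have "\<dots> = integral\<^sup>L (distr \<mu> borel (\<lambda>W. V ** W)) f" using haarD(4)[OF assms V] by simp
  also have "\<dots> = (\<integral>W. f (V ** W) \<partial>\<mu>)" by (rule integral_distr[OF Tm fm])
  also have "\<dots> = (\<integral>W. (\<Sum>a\<in>UNIV. V$i$a * (\<Sum>b\<in>UNIV. cnj (V$j$b) * (\<Sum>c\<in>UNIV. V$k$c * (\<Sum>d\<in>UNIV. cnj (V$l$d) *
        (conj_by W M $ a $ b * conj_by W M $ c $ d))))) \<partial>\<mu>)"
    unfolding f_def conj_by_mult conj_entry2 prod_nest ..
  also have "\<dots> = (\<Sum>a\<in>UNIV. V$i$a * (\<Sum>b\<in>UNIV. cnj (V$j$b) * (\<Sum>c\<in>UNIV. V$k$c * (\<Sum>d\<in>UNIV. cnj (V$l$d) * GM \<mu> M a b c d))))"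
    unfolding GM_def by (rule int_nest[OF integrable_prod2[OF assms]])
  finally show "GM \<mu> M i j k l = (\<Sum>a\<in>UNIV. V$i$a * (\<Sum>b\<in>UNIV. cnj (V$j$b) * (\<Sum>c\<in>UNIV. V$k$c * (\<Sum>d\<in>UNIV. cnj (V$l$d) * GM \<mu> M a b c d))))" .
qed




lemma trace_expand: "mtrace (Y ** A) * mtrace (Y ** B) =
  (\<Sum>i\<in>UNIV. \<Sum>j\<in>UNIV. \<Sum>k\<in>UNIV. \<Sum>l\<in>UNIV. (A$j$i * B$l$k) * (Y$i$j * Y$k$l :: complex))"
proof -
  define T where "T = mtrace (Y ** B)"
  have "mtrace (Y ** A) * T = (\<Sum>i\<in>UNIV. \<Sum>j\<in>UNIV. (Y$i$j * A$j$i) * T)"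
    unfolding mtrace_def mmult_nth by (simp only: sum_distrib_right)
  also have "\<dots> = (\<Sum>i\<in>UNIV. \<Sum>j\<in>UNIV. \<Sum>k\<in>UNIV. \<Sum>l\<in>UNIV. (A$j$i * B$l$k) * (Y$i$j * Y$k$l))"
    unfolding T_def mtrace_def mmult_nth by (simp add: sum_distrib_left mult_ac)
  finally show ?thesis unfolding T_def .
qed

lemma trace_conj_unitary: "unitary_mat W \<Longrightarrow> mtrace (conj_by W M) = mtrace M"
  unfolding conj_by_def unitary_mat_def
  by (metis matrix_mul_assoc matrix_mul_lid mtrace_comm)

lemma trace_conj_sq_unitary: "unitary_mat W \<Longrightarrow> mtrace (conj_by W M ** conj_by W M) = mtrace (M ** M)"
proof -
  assume u: "unitary_mat W"
  have "conj_by W M ** conj_by W M = conj_by W (M ** M)"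
    using u unfolding conj_by_def unitary_mat_def
    by (metis matrix_mul_assoc matrix_mul_lid)
  then show ?thesis using trace_conj_unitary[OF u] by simp
qed

lemma two_elems: "CARD('a::finite) \<ge> 2 \<Longrightarrow> \<exists>x y::'a. x \<noteq> y"
proof (rule ccontr)
  assume c: "CARD('a) \<ge> 2" "\<not> (\<exists>x y::'a. x \<noteq> y)"
  then have "(UNIV::'a set) = {undefined}" by auto
  then have "CARD('a) = card {undefined::'a}" by (rule arg_cong)
  then have "CARD('a) = 1" by simp
  with c show False by simp
qed

lemma moment:
  fixes M :: "complex^'a::finite^'a"
  assumes haar: "haar_measure \<mu>" and card: "CARD('a) \<ge> 2"
  defines "d \<equiv> (of_nat CARD('a) :: complex)"
  shows "(\<integral>W. mtrace (conj_by W M ** A) * mtrace (conj_by W M ** B) \<partial>\<mu>)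
     = (d * (mtrace M)^2 - mtrace (M ** M)) / (d * (d^2 - 1)) * mtrace A * mtrace B
       + (d * mtrace (M ** M) - (mtrace M)^2) / (d * (d^2 - 1)) * mtrace (A ** B)"
proof -
  interpret prob_space \<mu> using haarD(1)[OF haar] .
  obtain i0 k0 :: 'a where ik: "i0 \<noteq> k0" using two_elems[OF card] by blast
  define G where "G = GM \<mu> M"
  define b where "b = G i0 i0 k0 k0"
  define e where "e = G i0 k0 k0 i0"
  have S: "G i j k l = (if i = j \<and> k = l then b else 0) + (if i = l \<and> j = k then e else 0)" for i j k l
    unfolding b_def e_def G_def by (rule inv_struct[OF GM_inv[OF haar] ik])
  have ip: "integrable \<mu> (\<lambda>W. conj_by W M $ i $ j * conj_by W M $ k $ l)" for i j k l
    by (rule integrable_prod2[OF haar])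
  have main: "(\<integral>W. mtrace (conj_by W M ** A) * mtrace (conj_by W M ** B) \<partial>\<mu>)
     = b * mtrace A * mtrace B + e * mtrace (A ** B)"
  proof -
    have "(\<integral>W. mtrace (conj_by W M ** A) * mtrace (conj_by W M ** B) \<partial>\<mu>)
        = (\<Sum>i\<in>UNIV. \<Sum>j\<in>UNIV. \<Sum>k\<in>UNIV. \<Sum>l\<in>UNIV. (A$j$i * B$l$k) * G i j k l)"
      unfolding trace_expand G_def GM_def by (rule int_sum4[OF ip])
    also have "\<dots> = b * mtrace A * mtrace B + e * mtrace (A ** B)"
      by (rule struct_sums(3)[OF S])
    finally show ?thesis .
  qed
  have cm: "(\<lambda>W. f (conj_by W M)) \<in> borel_measurable \<mu>" if "\<And>x. isCont (\<lambda>W. f (conj_by W M)) x" for f :: "_ \<Rightarrow> complex"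
    by (rule meas_mu[OF haar cont_meas[OF that]])
  have n1: "(\<Sum>i\<in>UNIV. \<Sum>k\<in>UNIV. G i i k k) = (mtrace M)^2"
  proof -
    have "(\<Sum>i\<in>UNIV. \<Sum>k\<in>UNIV. G i i k k) = (\<integral>W. (\<Sum>i\<in>UNIV. \<Sum>k\<in>UNIV. conj_by W M $ i $ i * conj_by W M $ k $ k) \<partial>\<mu>)"
      unfolding G_def GM_def using ip by (simp add: integrable_sum)
    also have "\<dots> = (\<integral>W. mtrace (conj_by W M) * mtrace (conj_by W M) \<partial>\<mu>)"
      unfolding mtrace_def by (simp add: sum_product)
    also have "\<dots> = (\<integral>W. mtrace M * mtrace M \<partial>\<mu>)"
    proof (rule integral_cong_AE)
      show "(\<lambda>W. mtrace (conj_by W M) * mtrace (conj_by W M)) \<in> borel_measurable \<mu>"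
        by (rule cm) (simp add: mtrace_def conj_by_def isCont_entry continuous_intros)
      show "(\<lambda>W. mtrace M * mtrace M) \<in> borel_measurable \<mu>" by simp
      show "AE W in \<mu>. mtrace (conj_by W M) * mtrace (conj_by W M) = mtrace M * mtrace M"
        using haarD(3)[OF haar] by (rule AE_mp) (auto simp: trace_conj_unitary)
    qed
    also have "\<dots> = (mtrace M)^2" by (simp add: power2_eq_square prob_space)
    finally show ?thesis .
  qed
  have n2: "(\<Sum>i\<in>UNIV. \<Sum>j\<in>UNIV. G i j j i) = mtrace (M ** M)"
  proof -
    have "(\<Sum>i\<in>UNIV. \<Sum>j\<in>UNIV. G i j j i) = (\<integral>W. (\<Sum>i\<in>UNIV. \<Sum>j\<in>UNIV. conj_by W M $ i $ j * conj_by W M $ j $ i) \<partial>\<mu>)"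
      unfolding G_def GM_def using ip by (simp add: integrable_sum)
    also have "\<dots> = (\<integral>W. mtrace (conj_by W M ** conj_by W M) \<partial>\<mu>)"
      unfolding mtrace_def mmult_nth ..
    also have "\<dots> = (\<integral>W. mtrace (M ** M) \<partial>\<mu>)"
    proof (rule integral_cong_AE)
      show "(\<lambda>W. mtrace (conj_by W M ** conj_by W M)) \<in> borel_measurable \<mu>"
        by (rule cm) (simp add: mtrace_def mmult_nth conj_by_def isCont_entry continuous_intros)
      show "(\<lambda>W. mtrace (M ** M)) \<in> borel_measurable \<mu>" by simp
      show "AE W in \<mu>. mtrace (conj_by W M ** conj_by W M) = mtrace (M ** M)"
        using haarD(3)[OF haar] by (rule AE_mp) (auto simp: trace_conj_sq_unitary)
    qed
    also have "\<dots> = mtrace (M ** M)" by (simp add: prob_space)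
    finally show ?thesis .
  qed
  have e1: "b * d^2 + e * d = (mtrace M)^2" using n1 struct_sums(1)[OF S] unfolding d_def by simp
  have e2: "b * d + e * d^2 = mtrace (M ** M)" using n2 struct_sums(2)[OF S] unfolding d_def by simp
  have dn: "d * (d^2 - 1) \<noteq> 0"
  proof -
    have "d \<noteq> 0" using card unfolding d_def by simp
    moreover have "d^2 \<noteq> 1"
    proof
      assume "d^2 = 1"
      then have "of_nat (CARD('a)^2) = (1::complex)" unfolding d_def by simp
      then have "CARD('a)^2 = 1" by (simp only: of_nat_eq_1_iff)
      then show False using card by (simp add: power2_eq_square)
    qed
    ultimately show ?thesis by simp
  qed
  have "b * (d * (d^2 - 1)) = d * (mtrace M)^2 - mtrace (M ** M)"
    using e1 e2 by algebra
  then have bb: "b = (d * (mtrace M)^2 - mtrace (M ** M)) / (d * (d^2 - 1))"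
    using dn by (simp add: field_simps)
  have "e * (d * (d^2 - 1)) = d * mtrace (M ** M) - (mtrace M)^2"
    using e1 e2 by algebra
  then have ee: "e = (d * mtrace (M ** M) - (mtrace M)^2) / (d * (d^2 - 1))"
    using dn by (simp add: field_simps)
  show ?thesis using main unfolding bb ee .
qed




lemma card_idx: "CARD('n::finite \<Rightarrow> bool) = 2 ^ CARD('n)"
  by (simp add: card_fun)

lemma card_idx_ge2: "CARD('n::finite \<Rightarrow> bool) \<ge> 2"
proof -
  have "CARD('n) \<ge> 1" by (simp add: Suc_leI finite_UNIV_card_ge_0)
  then have "(2::nat) ^ 1 \<le> 2 ^ CARD('n)" by (rule power_increasing) simp
  then show ?thesis by (simp add: card_idx)
qed

lemma dC: "(of_nat CARD('n::finite \<Rightarrow> bool) :: complex) = complex_of_real ((2::real) ^ CARD('n))"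
  by (simp add: card_idx)

lemma integrable_tr2:
  fixes M :: "complex^'a::finite^'a"
  assumes "haar_measure \<mu>"
  shows "integrable \<mu> (\<lambda>W. mtrace (conj_by W M ** A) * mtrace (conj_by W M ** B))"
  unfolding trace_expand
  by (simp add: integrable_sum integrable_mult_right integrable_prod2[OF assms])

lemma int_Re_sum:
  assumes "\<And>P. integrable \<mu> (f P)"
  shows "(\<integral>W. Re (\<Sum>P\<in>(UNIV::'p::finite set). c P * (f P W :: complex)) \<partial>\<mu>) = Re (\<Sum>P\<in>UNIV. c P * integral\<^sup>L \<mu> (f P))"
  using assms by (simp add: integrable_sum integrable_mult_right)

lemma re_sq: "z = complex_of_real (Re z) \<Longrightarrow> (Re z)^2 = Re (z * z)"
  by (metis Re_complex_of_real of_real_mult power2_eq_square)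

lemma re_sq2: "z = complex_of_real (Re z) \<Longrightarrow> w = complex_of_real (Re w) \<Longrightarrow>
  (Re (z * w))^2 = Re (w * w * (z * z))"
  by (metis Re_complex_of_real of_real_mult power2_eq_square mult_ac)

lemma re_sq2': "z = complex_of_real (Re z) \<Longrightarrow> w = complex_of_real (Re w) \<Longrightarrow>
  (Re (z * w))^2 = Re (z * z * (w * w))"
  by (metis Re_complex_of_real of_real_mult power2_eq_square mult_ac)

lemma re_3': "a = complex_of_real (Re a) \<Longrightarrow> z = complex_of_real (Re z) \<Longrightarrow> w = complex_of_real (Re w) \<Longrightarrow>
  Re a * Re (z * w) = Re (z * (a * w))"
  by (metis Re_complex_of_real of_real_mult mult_ac)

lemma re_3: "a = complex_of_real (Re a) \<Longrightarrow> z = complex_of_real (Re z) \<Longrightarrow> w = complex_of_real (Re w) \<Longrightarrow>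
  Re a * Re (z * w) = Re (w * (a * z))"
  by (metis Re_complex_of_real of_real_mult mult_ac)

lemma OP_trP: "mtrace Q = 0 \<Longrightarrow> mtrace (Q ** pauli_mat P) * mtrace (pauli_mat P) = 0"
  by (simp add: pauli_trace pauli_id)

lemma mtrace_mat1: "mtrace (mat 1 :: complex^'a::finite^'a) = of_nat CARD('a)"
  by (simp add: mtrace_def mat1_nth)

lemma trace4_assoc: "mtrace (A ** P ** B ** P) = mtrace (A ** (P ** B ** P))"
  by (simp add: matrix_mul_assoc)

lemma trace4_cyc: "mtrace (A ** P ** B ** P) = mtrace (B ** (P ** A ** P))"
proof -
  have "mtrace (A ** P ** B ** P) = mtrace (P ** (A ** P ** B))" by (rule mtrace_comm)
  also have "\<dots> = mtrace ((P ** A ** P) ** B)" by (simp add: matrix_mul_assoc)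
  also have "\<dots> = mtrace (B ** (P ** A ** P))" by (rule mtrace_comm)
  finally show ?thesis .
qed

lemma ar2: "(d::real) \<noteq> 0 \<Longrightarrow> D \<noteq> 0 \<Longrightarrow> - h / (d * D) + h / D * p = (d * p - 1) / (d * D) * h"
  by (simp add: field_simps)

lemma ar4: "(d::real) \<noteq> 0 \<Longrightarrow> D \<noteq> 0 \<Longrightarrow> - h / (d * D) * (d * d) + h / D * d * (d * p) = (d\<^sup>2 * p - d) / D * h"
  by (simp add: field_simps power2_eq_square)

lemma ar6: "(d::real) \<noteq> 0 \<Longrightarrow> D \<noteq> 0 \<Longrightarrow> - h / (d * D) * d + h / D * (d * p) = (d * p - 1) / D * h"
  by (simp add: field_simps)

context
  fixes \<rho> Q :: "'n::finite op" and \<mu> :: "('n op) measure"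
  assumes haar: "haar_measure \<mu>"
    and dens: "density_op \<rho>"
    and hQ: "hermitian_mat Q" and tQ: "mtrace Q = 0"
begin

definition "dd = (2::real) ^ CARD('n)"
definition "pp = Re (mtrace (\<rho> ** \<rho>))"
definition "hh = (hs_norm Q)\<^sup>2"

lemma hrho: "hermitian_mat \<rho>" using dens by (simp add: density_op_def)
lemma trho: "mtrace \<rho> = 1" using dens by (simp add: density_op_def)
lemma trho2: "mtrace (\<rho> ** \<rho>) = complex_of_real pp"
  unfolding pp_def by (rule herm_trace_real'[OF hrho hrho])
lemma trQ2: "mtrace (Q ** Q) = complex_of_real hh"
  unfolding hh_def hs_norm_sq[OF hQ] by (rule herm_trace_real'[OF hQ hQ])
lemma dd_ge: "dd \<ge> 2"
proof -
  have "real (CARD('n \<Rightarrow> bool)) \<ge> 2" using card_idx_ge2 by simp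
  then show ?thesis unfolding dd_def card_idx by simp
qed
lemma dd_nz: "dd \<noteq> 0" "dd^2 - 1 \<noteq> 0"
proof -
  show "dd \<noteq> 0" using dd_ge by simp
  have "dd^2 \<ge> 2^2" using dd_ge by (intro power_mono) auto
  then show "dd^2 - 1 \<noteq> 0" by simp
qed
lemma dC': "(of_nat CARD('n \<Rightarrow> bool) :: complex) = complex_of_real dd"
  unfolding dd_def by (rule dC)
lemma two_pow: "(2::complex) ^ CARD('n) = complex_of_real dd"
  unfolding dd_def by simp

lemma mom_rho: "(\<integral>W. mtrace (conj_by W \<rho> ** A) * mtrace (conj_by W \<rho> ** B) \<partial>\<mu>)
   = complex_of_real ((dd - pp) / (dd * (dd^2 - 1))) * mtrace A * mtrace B
   + complex_of_real ((dd * pp - 1) / (dd * (dd^2 - 1))) * mtrace (A ** B)"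
  unfolding moment[OF haar card_idx_ge2] dC' trho trho2 by simp

lemma mom_Q: "(\<integral>W. mtrace (conj_by W Q ** A) * mtrace (conj_by W Q ** B) \<partial>\<mu>)
   = complex_of_real (- hh / (dd * (dd^2 - 1))) * mtrace A * mtrace B
   + complex_of_real (hh / (dd^2 - 1)) * mtrace (A ** B)"
proof -
  let ?D = "complex_of_real dd * ((complex_of_real dd)^2 - 1)"
  have m: "(\<integral>W. mtrace (conj_by W Q ** A) * mtrace (conj_by W Q ** B) \<partial>\<mu>)
    = (complex_of_real dd * 0^2 - complex_of_real hh) / ?D * mtrace A * mtrace B
    + (complex_of_real dd * complex_of_real hh - 0^2) / ?D * mtrace (A ** B)"
    using moment[OF haar card_idx_ge2, of Q A B] unfolding dC' tQ trQ2 .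
  have c1: "(complex_of_real dd * 0^2 - complex_of_real hh) / ?D = complex_of_real (- hh / (dd * (dd^2 - 1)))"
    by simp
  have r: "dd * hh / (dd * (dd^2 - 1)) = hh / (dd^2 - 1)" using dd_nz by simp
  have c2: "(complex_of_real dd * complex_of_real hh - 0^2) / ?D = complex_of_real (hh / (dd^2 - 1))"
  proof -
    have "(complex_of_real dd * complex_of_real hh - 0^2) / ?D = complex_of_real (dd * hh / (dd * (dd^2 - 1)))"
      by simp
    then show ?thesis unfolding r .
  qed
  show ?thesis unfolding m c1 c2 ..
qed

lemma hXr: "hermitian_mat (conj_by W \<rho>)" unfolding conj_by_def by (rule herm_conj[OF hrho])
lemma hXQ: "hermitian_mat (conj_by W Q)" unfolding conj_by_def by (rule herm_conj[OF hQ])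

lemma Q1: "(\<integral>W. (Re (mtrace (conj_by W \<rho> ** Q)))\<^sup>2 \<partial>\<mu>) = (dd * pp - 1) / (dd * (dd\<^sup>2 - 1)) * hh"
proof -
  have "(\<integral>W. (Re (mtrace (conj_by W \<rho> ** Q)))\<^sup>2 \<partial>\<mu>)
      = (\<integral>W. Re (mtrace (conj_by W \<rho> ** Q) * mtrace (conj_by W \<rho> ** Q)) \<partial>\<mu>)"
    by (intro Bochner_Integration.integral_cong refl re_sq herm_trace_real'[OF hXr hQ])
  also have "\<dots> = Re (\<integral>W. mtrace (conj_by W \<rho> ** Q) * mtrace (conj_by W \<rho> ** Q) \<partial>\<mu>)"
    by (rule integral_Re[OF integrable_tr2[OF haar]])
  also have "\<dots> = (dd * pp - 1) / (dd * (dd\<^sup>2 - 1)) * hh"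
    unfolding mom_rho tQ trQ2 by simp
  finally show ?thesis .
qed

lemma Q2: "(\<integral>W. (Re (mtrace (\<rho> ** conj_by W Q)))\<^sup>2 \<partial>\<mu>) = (dd * pp - 1) / (dd * (dd\<^sup>2 - 1)) * hh"
proof -
  have "(\<integral>W. (Re (mtrace (\<rho> ** conj_by W Q)))\<^sup>2 \<partial>\<mu>)
      = (\<integral>W. Re (mtrace (conj_by W Q ** \<rho>) * mtrace (conj_by W Q ** \<rho>)) \<partial>\<mu>)"
    by (intro Bochner_Integration.integral_cong refl) (metis re_sq herm_trace_real'[OF hXQ hrho] mtrace_comm)
  also have "\<dots> = Re (\<integral>W. mtrace (conj_by W Q ** \<rho>) * mtrace (conj_by W Q ** \<rho>) \<partial>\<mu>)"
    by (rule integral_Re[OF integrable_tr2[OF haar]])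
  also have "\<dots> = - hh / (dd * (dd^2 - 1)) + hh / (dd^2 - 1) * pp"
    unfolding mom_Q trho trho2 by simp
  also have "\<dots> = (dd * pp - 1) / (dd * (dd\<^sup>2 - 1)) * hh"
    by (rule ar2[OF dd_nz])
  finally show ?thesis .
qed

lemma trPP: "mtrace (pauli_mat (P::'n \<Rightarrow> pauli) ** pauli_mat P) = complex_of_real dd"
  by (simp add: pauli_sq mtrace_mat1 dC')

lemma compl: "(\<Sum>P\<in>UNIV. mtrace ((A::'n op) ** pauli_mat P) * mtrace (A ** pauli_mat P)) = complex_of_real dd * mtrace (A ** A)"
  using pauli_trace_compl[of A A] unfolding two_pow .

lemma Q3: "(\<integral>W. vnorm2 (Xi (conj_by W \<rho>) Q) \<partial>\<mu>) = (dd\<^sup>2 * pp - dd) / (dd\<^sup>2 - 1) * hh"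
proof -
  let ?w = "\<lambda>P. mtrace (Q ** pauli_mat P)"
  let ?f = "\<lambda>P W. mtrace (conj_by W \<rho> ** pauli_mat P) * mtrace (conj_by W \<rho> ** pauli_mat P)"
  let ?b = "complex_of_real ((dd - pp) / (dd * (dd^2 - 1)))"
  let ?e = "complex_of_real ((dd * pp - 1) / (dd * (dd^2 - 1)))"
  have pw: "vnorm2 (Xi (conj_by W \<rho>) Q) = Re (\<Sum>P\<in>UNIV. (?w P * ?w P) * ?f P W)" for W
    unfolding vnorm2_def Xi_def Re_sum
    by (intro sum.cong refl re_sq2 herm_trace_real'[OF hXr pauli_herm] herm_trace_real'[OF hQ pauli_herm])
  have "(\<integral>W. vnorm2 (Xi (conj_by W \<rho>) Q) \<partial>\<mu>) = (\<integral>W. Re (\<Sum>P\<in>UNIV. (?w P * ?w P) * ?f P W) \<partial>\<mu>)"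
    unfolding pw ..
  also have "\<dots> = Re (\<Sum>P\<in>UNIV. (?w P * ?w P) * integral\<^sup>L \<mu> (?f P))"
    by (rule int_Re_sum[OF integrable_tr2[OF haar]])
  also have "\<dots> = Re (\<Sum>P\<in>UNIV. ?e * complex_of_real dd * (?w P * ?w P))"
  proof -
    have "(?w P * ?w P) * integral\<^sup>L \<mu> (?f P) = ?e * complex_of_real dd * (?w P * ?w P)" for P
    proof -
      have wt: "?w P * mtrace (pauli_mat P) = 0" by (rule OP_trP[OF tQ])
      have "(?w P * ?w P) * integral\<^sup>L \<mu> (?f P)
         = (?w P * ?w P) * (?b * mtrace (pauli_mat P) * mtrace (pauli_mat P) + ?e * complex_of_real dd)"
        unfolding mom_rho trPP ..
      also have "\<dots> = ?e * complex_of_real dd * (?w P * ?w P)"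
        using wt by algebra
      finally show ?thesis .
    qed
    then show ?thesis by (simp only:)
  qed
  also have "\<dots> = Re (?e * complex_of_real dd * (complex_of_real dd * complex_of_real hh))"
    by (simp only: sum_distrib_left[symmetric] compl trQ2)
  also have "\<dots> = (dd * pp - 1) / (dd * (dd^2 - 1)) * dd * dd * hh" by simp
  also have "\<dots> = (dd\<^sup>2 * pp - dd) / (dd\<^sup>2 - 1) * hh"
    using dd_nz by (simp add: field_simps power2_eq_square)
  finally show ?thesis .
qed

lemma zt: "mtrace (\<rho> ** pauli_mat (P::'n \<Rightarrow> pauli)) * mtrace (pauli_mat P) = (if P = (\<lambda>_. PI) then complex_of_real dd else 0)"
  by (simp add: pauli_trace pauli_id trho two_pow)

lemma Q4: "(\<integral>W. vnorm2 (Xi \<rho> (conj_by W Q)) \<partial>\<mu>) = (dd\<^sup>2 * pp - dd) / (dd\<^sup>2 - 1) * hh"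
proof -
  let ?z = "\<lambda>P. mtrace (\<rho> ** pauli_mat P)"
  let ?t = "\<lambda>P. mtrace (pauli_mat P)"
  let ?f = "\<lambda>P W. mtrace (conj_by W Q ** pauli_mat P) * mtrace (conj_by W Q ** pauli_mat P)"
  let ?b = "complex_of_real (- hh / (dd * (dd^2 - 1)))"
  let ?e = "complex_of_real (hh / (dd^2 - 1))"
  have pw: "vnorm2 (Xi \<rho> (conj_by W Q)) = Re (\<Sum>P\<in>UNIV. (?z P * ?z P) * ?f P W)" for W
    unfolding vnorm2_def Xi_def Re_sum
    by (intro sum.cong refl re_sq2' herm_trace_real'[OF hXQ pauli_herm] herm_trace_real'[OF hrho pauli_herm])
  have "(\<integral>W. vnorm2 (Xi \<rho> (conj_by W Q)) \<partial>\<mu>) = (\<integral>W. Re (\<Sum>P\<in>UNIV. (?z P * ?z P) * ?f P W) \<partial>\<mu>)"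
    unfolding pw ..
  also have "\<dots> = Re (\<Sum>P\<in>UNIV. (?z P * ?z P) * integral\<^sup>L \<mu> (?f P))"
    by (rule int_Re_sum[OF integrable_tr2[OF haar]])
  also have "\<dots> = Re (\<Sum>P\<in>UNIV. ?b * ((?z P * ?t P) * (?z P * ?t P)) + ?e * complex_of_real dd * (?z P * ?z P))"
  proof -
    have "(?z P * ?z P) * integral\<^sup>L \<mu> (?f P) = ?b * ((?z P * ?t P) * (?z P * ?t P)) + ?e * complex_of_real dd * (?z P * ?z P)" for P
    proof -
      have "(?z P * ?z P) * integral\<^sup>L \<mu> (?f P)
         = (?z P * ?z P) * (?b * ?t P * ?t P + ?e * complex_of_real dd)"
        unfolding mom_Q trPP ..
      also have "\<dots> = ?b * ((?z P * ?t P) * (?z P * ?t P)) + ?e * complex_of_real dd * (?z P * ?z P)"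
        by algebra
      finally show ?thesis .
    qed
    then show ?thesis by (simp only:)
  qed
  also have "\<dots> = Re (?b * (complex_of_real dd * complex_of_real dd) + ?e * complex_of_real dd * (complex_of_real dd * complex_of_real pp))"
  proof -
    have zz: "(?z P * ?t P) * (?z P * ?t P) = (if P = (\<lambda>_. PI) then complex_of_real dd * complex_of_real dd else 0)" for P
      unfolding zt by simp
    have "(\<Sum>P\<in>UNIV. (?z P * ?t P) * (?z P * ?t P)) = complex_of_real dd * complex_of_real dd"
      by (simp only: zz sum.delta finite UNIV_I if_True)
    then show ?thesis
      by (simp only: sum.distrib sum_distrib_left[symmetric] compl trho2)
  qed
  also have "\<dots> = - hh / (dd * (dd^2 - 1)) * (dd * dd) + hh / (dd^2 - 1) * dd * (dd * pp)" by simp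
  also have "\<dots> = (dd\<^sup>2 * pp - dd) / (dd\<^sup>2 - 1) * hh"
    by (rule ar4[OF dd_nz])
  finally show ?thesis .
qed

lemma Q5: "(\<integral>W. vdot (Xit (conj_by W \<rho>) Q) (Xi (conj_by W \<rho>) Q) \<partial>\<mu>) = (dd * pp - 1) / (dd\<^sup>2 - 1) * hh"
proof -
  let ?w = "\<lambda>P. mtrace (Q ** pauli_mat P)"
  let ?t = "\<lambda>P. mtrace (pauli_mat P)"
  let ?R = "\<lambda>P. pauli_mat P ** Q ** pauli_mat P"
  let ?f = "\<lambda>P W. mtrace (conj_by W \<rho> ** ?R P) * mtrace (conj_by W \<rho> ** pauli_mat P)"
  let ?b = "complex_of_real ((dd - pp) / (dd * (dd^2 - 1)))"
  let ?e = "complex_of_real ((dd * pp - 1) / (dd * (dd^2 - 1)))"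
  have pw: "vdot (Xit (conj_by W \<rho>) Q) (Xi (conj_by W \<rho>) Q) = Re (\<Sum>P\<in>UNIV. ?w P * ?f P W)" for W
    unfolding vdot_def Xit_def Xi_def Re_sum trace4_assoc
    by (intro sum.cong refl re_3 herm_trace_real'[OF hXr herm_mult3[OF pauli_herm hQ]]
        herm_trace_real'[OF hXr pauli_herm] herm_trace_real'[OF hQ pauli_herm])
  have "(\<integral>W. vdot (Xit (conj_by W \<rho>) Q) (Xi (conj_by W \<rho>) Q) \<partial>\<mu>) = (\<integral>W. Re (\<Sum>P\<in>UNIV. ?w P * ?f P W) \<partial>\<mu>)"
    unfolding pw ..
  also have "\<dots> = Re (\<Sum>P\<in>UNIV. ?w P * integral\<^sup>L \<mu> (?f P))"
    by (rule int_Re_sum[OF integrable_tr2[OF haar]])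
  also have "\<dots> = Re (\<Sum>P\<in>UNIV. ?e * (?w P * ?w P))"
  proof -
    have "?w P * integral\<^sup>L \<mu> (?f P) = ?e * (?w P * ?w P)" for P
    proof -
      have wt: "?w P * ?t P = 0" by (rule OP_trP[OF tQ])
      have rp: "mtrace (?R P ** pauli_mat P) = ?w P"
      proof -
        have e: "?R P ** pauli_mat P = pauli_mat P ** Q"
          by (simp add: matrix_mul_assoc[symmetric] pauli_sq)
        have "mtrace (?R P ** pauli_mat P) = mtrace (pauli_mat P ** Q)" unfolding e ..
        also have "\<dots> = mtrace (Q ** pauli_mat P)" by (rule mtrace_comm)
        finally show ?thesis .
      qed
      have "?w P * integral\<^sup>L \<mu> (?f P) = ?w P * (?b * mtrace (?R P) * ?t P + ?e * ?w P)"
        unfolding mom_rho rp ..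
      also have "\<dots> = ?e * (?w P * ?w P)"
        using wt by algebra
      finally show ?thesis .
    qed
    then show ?thesis by (simp only:)
  qed
  also have "\<dots> = Re (?e * (complex_of_real dd * complex_of_real hh))"
    by (simp only: sum_distrib_left[symmetric] compl trQ2)
  also have "\<dots> = (dd * pp - 1) / (dd * (dd^2 - 1)) * (dd * hh)" by simp
  also have "\<dots> = (dd * pp - 1) / (dd\<^sup>2 - 1) * hh"
    using dd_nz by simp
  finally show ?thesis .
qed

lemma Q6: "(\<integral>W. vdot (Xit \<rho> (conj_by W Q)) (Xi \<rho> (conj_by W Q)) \<partial>\<mu>) = (dd * pp - 1) / (dd\<^sup>2 - 1) * hh"
proof -
  let ?z = "\<lambda>P. mtrace (\<rho> ** pauli_mat P)"
  let ?t = "\<lambda>P. mtrace (pauli_mat P)"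
  let ?R = "\<lambda>P. pauli_mat P ** \<rho> ** pauli_mat P"
  let ?f = "\<lambda>P W. mtrace (conj_by W Q ** ?R P) * mtrace (conj_by W Q ** pauli_mat P)"
  let ?b = "complex_of_real (- hh / (dd * (dd^2 - 1)))"
  let ?e = "complex_of_real (hh / (dd^2 - 1))"
  have pw: "vdot (Xit \<rho> (conj_by W Q)) (Xi \<rho> (conj_by W Q)) = Re (\<Sum>P\<in>UNIV. ?z P * ?f P W)" for W
    unfolding vdot_def Xit_def Xi_def Re_sum trace4_cyc[of \<rho>]
    by (intro sum.cong refl re_3' herm_trace_real'[OF hXQ herm_mult3[OF pauli_herm hrho]]
        herm_trace_real'[OF hXQ pauli_herm] herm_trace_real'[OF hrho pauli_herm])
  have "(\<integral>W. vdot (Xit \<rho> (conj_by W Q)) (Xi \<rho> (conj_by W Q)) \<partial>\<mu>) = (\<integral>W. Re (\<Sum>P\<in>UNIV. ?z P * ?f P W) \<partial>\<mu>)"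
    unfolding pw ..
  also have "\<dots> = Re (\<Sum>P\<in>UNIV. ?z P * integral\<^sup>L \<mu> (?f P))"
    by (rule int_Re_sum[OF integrable_tr2[OF haar]])
  also have "\<dots> = Re (\<Sum>P\<in>UNIV. ?b * (?z P * ?t P) + ?e * (?z P * ?z P))"
  proof -
    have "?z P * integral\<^sup>L \<mu> (?f P) = ?b * (?z P * ?t P) + ?e * (?z P * ?z P)" for P
    proof -
      have r1: "mtrace (?R P) = 1"
      proof -
        have "mtrace (?R P) = mtrace (pauli_mat P ** (pauli_mat P ** \<rho>))" by (rule mtrace_comm)
        also have "\<dots> = mtrace \<rho>" by (simp add: matrix_mul_assoc pauli_sq)
        finally show ?thesis using trho by simp
      qed
      have rp: "mtrace (?R P ** pauli_mat P) = ?z P"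
      proof -
        have e: "?R P ** pauli_mat P = pauli_mat P ** \<rho>"
          by (simp add: matrix_mul_assoc[symmetric] pauli_sq)
        have "mtrace (?R P ** pauli_mat P) = mtrace (pauli_mat P ** \<rho>)" unfolding e ..
        also have "\<dots> = mtrace (\<rho> ** pauli_mat P)" by (rule mtrace_comm)
        finally show ?thesis .
      qed
      have "?z P * integral\<^sup>L \<mu> (?f P) = ?z P * (?b * 1 * ?t P + ?e * ?z P)"
        unfolding mom_Q rp r1 ..
      also have "\<dots> = ?b * (?z P * ?t P) + ?e * (?z P * ?z P)"
        by algebra
      finally show ?thesis .
    qed
    then show ?thesis by (simp only:)
  qed
  also have "\<dots> = Re (?b * complex_of_real dd + ?e * (complex_of_real dd * complex_of_real pp))"
  proof -
    have "(\<Sum>P\<in>UNIV. ?z P * ?t P) = complex_of_real dd"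
      by (simp only: zt sum.delta finite UNIV_I if_True)
    then show ?thesis
      by (simp only: sum.distrib sum_distrib_left[symmetric] compl trho2)
  qed
  also have "\<dots> = - hh / (dd * (dd^2 - 1)) * dd + hh / (dd^2 - 1) * (dd * pp)" by simp
  also have "\<dots> = (dd * pp - 1) / (dd\<^sup>2 - 1) * hh"
    by (rule ar6[OF dd_nz])
  finally show ?thesis .
qed

end


theorem mainTheorem19:
  fixes \<rho> Obs :: "'n::finite op" and \<mu> :: "('n op) measure"
  assumes "haar_measure \<mu>"
    and "density_op \<rho>"
    and "hermitian_mat Obs" and "mtrace Obs = 0"
  shows "let d = (2::real) ^ CARD('n); p = Re (mtrace (\<rho> ** \<rho>)); h = (hs_norm Obs)\<^sup>2 in
    (\<integral>W. (Re (mtrace (conj_by W \<rho> ** Obs)))\<^sup>2 \<partial>\<mu>) = (d * p - 1) / (d * (d\<^sup>2 - 1)) * h \<and>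
    (\<integral>W. (Re (mtrace (\<rho> ** conj_by W Obs)))\<^sup>2 \<partial>\<mu>) = (d * p - 1) / (d * (d\<^sup>2 - 1)) * h \<and>
    (\<integral>W. vnorm2 (Xi (conj_by W \<rho>) Obs) \<partial>\<mu>) = (d\<^sup>2 * p - d) / (d\<^sup>2 - 1) * h \<and>
    (\<integral>W. vnorm2 (Xi \<rho> (conj_by W Obs)) \<partial>\<mu>) = (d\<^sup>2 * p - d) / (d\<^sup>2 - 1) * h \<and>
    (\<integral>W. vdot (Xit (conj_by W \<rho>) Obs) (Xi (conj_by W \<rho>) Obs) \<partial>\<mu>) = (d * p - 1) / (d\<^sup>2 - 1) * h \<and>
    (\<integral>W. vdot (Xit \<rho> (conj_by W Obs)) (Xi \<rho> (conj_by W Obs)) \<partial>\<mu>) = (d * p - 1) / (d\<^sup>2 - 1) * h"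
proof -
  show ?thesis unfolding Let_def
    using Q1[OF assms, unfolded dd_def[OF assms] pp_def[OF assms] hh_def[OF assms]] Q2[OF assms, unfolded dd_def[OF assms] pp_def[OF assms] hh_def[OF assms]]
      Q3[OF assms, unfolded dd_def[OF assms] pp_def[OF assms] hh_def[OF assms]] Q4[OF assms, unfolded dd_def[OF assms] pp_def[OF assms] hh_def[OF assms]]
      Q5[OF assms, unfolded dd_def[OF assms] pp_def[OF assms] hh_def[OF assms]] Q6[OF assms, unfolded dd_def[OF assms] pp_def[OF assms] hh_def[OF assms]]
    by blast
qed

end
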